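(* Let $\Sigma^*$ be an $n\times n$ positive definite matrix with $\Omega^*=(\Sigma^* )^{-1}$ whose conditional independence structure is a tree $T^*$, let $D^*$ be a diagonal matrix with nonnegative entries, let $a$ be a leaf of $T^*$ with neighbor $b$, and let $c$ satisfy $0<c<D^*_{bb}$. Define $\Sigma^q$ by $\Sigma^q_{aa}=\Sigma^*_{aa}-\frac{1}{\Omega^*_{aa}}$, $\Sigma^q_{bb}=\Sigma^*_{bb}+c$, and $\Sigma^q_{ij}=\Sigma^*_{ij}$ for all other $(i,j)$. Then $\Sigma^q$ is a covariance (positive definite) matrix and its conditional independence structure is the tree obtained from $T^*$ by exchanging the positions of nodes $a$ and $b$.
   Context: For an $n\times n$ positive definite matrix $\Sigma$ with inverse $\Omega$, its conditional independence structure is the graph on $\{1,\dots,n\}$ with an edge $\{i,j\}$ ($i\neq j$) iff $\Omega_{ij}\neq 0$. "Exchanging the positions of $a$ and $b$" means applying to $T^*$ the relabeling of vertices that swaps $a$ and $b$. *)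

theory Defs
  imports "HOL-Analysis.Analysis"
begin

definition pos_def :: "real^'n^'n \<Rightarrow> bool" where
  "pos_def S \<longleftrightarrow> transpose S = S \<and> (\<forall>x. x \<noteq> 0 \<longrightarrow> x \<bullet> (S *v x) > 0)"

definition ci_adj :: "real^'n^'n \<Rightarrow> 'n \<Rightarrow> 'n \<Rightarrow> bool" where
  "ci_adj S i j \<longleftrightarrow> i \<noteq> j \<and> matrix_inv S $ i $ j \<noteq> 0"

definition walk :: "('n \<Rightarrow> 'n \<Rightarrow> bool) \<Rightarrow> 'n list \<Rightarrow> bool" where
  "walk E vs \<longleftrightarrow> vs \<noteq> [] \<and> (\<forall>k. Suc k < length vs \<longrightarrow> E (vs ! k) (vs ! Suc k))"

definition graph_connected :: "('n \<Rightarrow> 'n \<Rightarrow> bool) \<Rightarrow> bool" where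
  "graph_connected E \<longleftrightarrow> (\<forall>u v. \<exists>vs. walk E vs \<and> hd vs = u \<and> last vs = v)"

definition has_cycle :: "('n \<Rightarrow> 'n \<Rightarrow> bool) \<Rightarrow> bool" where
  "has_cycle E \<longleftrightarrow> (\<exists>vs. length vs \<ge> 3 \<and> distinct vs \<and> walk E vs \<and> E (last vs) (hd vs))"

definition is_tree :: "('n \<Rightarrow> 'n \<Rightarrow> bool) \<Rightarrow> bool" where
  "is_tree E \<longleftrightarrow> (\<forall>u v. E u v \<longrightarrow> E v u) \<and> (\<forall>u. \<not> E u u) \<and> graph_connected E \<and> \<not> has_cycle E"

definition swap_ab :: "'n \<Rightarrow> 'n \<Rightarrow> 'n \<Rightarrow> 'n" where
  "swap_ab a b x = (if x = a then b else if x = b then a else x)"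

end

theory Submission
  imports Defs
begin

lemma minv_props:
  fixes A :: "real^'n^'n"
  assumes "invertible A"
  shows "A ** matrix_inv A = mat 1 \<and> matrix_inv A ** A = mat 1"
  using assms unfolding invertible_def matrix_inv_def by (rule someI_ex)

lemma minv_unique:
  fixes A B :: "real^'n^'n"
  assumes "A ** B = mat 1"
  shows "matrix_inv A = B"
proof -
  have BA: "B ** A = mat 1" using assms matrix_left_right_inverse by blast
  have inv: "invertible A" using assms BA invertible_def by blast
  have "matrix_inv A = matrix_inv A ** (A ** B)" using assms by simp
  also have "\<dots> = (matrix_inv A ** A) ** B" by (simp add: matrix_mul_assoc)
  also have "\<dots> = B" using minv_props[OF inv] by simp
  finally show ?thesis .
qed

lemma sum_split2:
  fixes f :: "'n::finite \<Rightarrow> real"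
  assumes "a \<noteq> b"
  shows "sum f UNIV = f a + f b + sum f (UNIV - {a,b})"
proof -
  have "sum f UNIV = f a + sum f (UNIV - {a})" by (simp add: sum.remove)
  also have "sum f (UNIV - {a}) = f b + sum f (UNIV - {a} - {b})"
    using assms by (intro sum.remove) auto
  finally show ?thesis by (simp add: set_diff_eq insert_commute Diff_insert)
qed

lemma pd_invertible:
  fixes S :: "real^'n^'n"
  assumes "pos_def S"
  shows "invertible S"
proof -
  have "\<forall>x. S *v x = 0 \<longrightarrow> x = 0"
  proof (intro allI impI)
    fix x assume "S *v x = 0"
    then have "x \<bullet> (S *v x) = 0" by simp
    then show "x = 0" using assms unfolding pos_def_def by force
  qed
  then show ?thesis using matrix_left_invertible_ker invertible_left_inverse by blast
qed


lemma prod_id: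
  fixes S W :: "real^'n^'n" and a b :: 'n and c :: real
  assumes ab: "a \<noteq> b" and SW: "S ** W = mat 1" and WS: "W ** S = mat 1"
    and sS: "transpose S = S" and sW: "transpose W = W"
    and w0: "W$a$a \<noteq> 0" and u0: "W$a$b \<noteq> 0"
    and leaf: "\<forall>j. j \<noteq> a \<longrightarrow> j \<noteq> b \<longrightarrow> W$a$j = 0" and c0: "c \<noteq> 0"
  defines "\<beta> \<equiv> - W$a$b / W$a$a"
  defines "Sq \<equiv> (\<chi> i j. if i = a \<and> j = a then S $ a $ a - 1 / (W $ a $ a)
                        else if i = b \<and> j = b then S $ b $ b + c
                        else S $ i $ j) :: real^'n^'n"
  defines "Wq \<equiv> (\<chi> i j. if i = a \<and> j = a then (W$b$b - (W$a$b)^2 / W$a$a + 1/c) / \<beta>^2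
      else if (i = a \<and> j = b) \<or> (i = b \<and> j = a) then - 1 / (c * \<beta>)
      else if i = b \<and> j = b then 1 / c
      else if i = a then W$b$j / \<beta>
      else if j = a then W$i$b / \<beta>
      else if i = b \<or> j = b then 0
      else W$i$j) :: real^'n^'n"
  shows "Sq ** Wq = mat 1"
proof -
  have symS: "S$i$j = S$j$i" for i j
  proof -
    have "S$i$j = transpose S $ i $ j" using sS by simp
    also have "\<dots> = S$j$i" by (simp add: transpose_def)
    finally show ?thesis .
  qed
  have symW: "W$i$j = W$j$i" for i j
  proof -
    have "W$i$j = transpose W $ i $ j" using sW by simp
    also have "\<dots> = W$j$i" by (simp add: transpose_def)
    finally show ?thesis .
  qed
  have m1: "(mat 1 :: real^'n^'n) $ i $ k = (if i = k then 1 else 0)" for i k by (simp add: mat_def)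
  have b0: "\<beta> \<noteq> 0" using w0 u0 by (simp add: \<beta>_def)
  have rowA: "W$a$a * S$a$k + W$a$b * S$b$k = mat 1 $ a $ k" for k
  proof -
    have "mat 1 $ a $ k = (W ** S) $ a $ k" using WS by simp
    also have "\<dots> = sum (\<lambda>j. W$a$j * S$j$k) UNIV"
      by (simp add: matrix_matrix_mult_def)
    also have "\<dots> = W$a$a * S$a$k + W$a$b * S$b$k + sum (\<lambda>j. W$a$j * S$j$k) (UNIV - {a,b})"
      by (rule sum_split2[OF ab])
    also have "sum (\<lambda>j. W$a$j * S$j$k) (UNIV - {a,b}) = 0"
      using leaf by (intro sum.neutral) auto
    finally show ?thesis by simp
  qed
  have Ssum: "sum (\<lambda>j. S$i$j * W$j$k) (UNIV-{a,b}) = mat 1 $ i $ k - S$i$a*W$a$k - S$i$b*W$b$k" for i k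
  proof -
    have "mat 1 $ i $ k = (S ** W) $ i $ k" using SW by simp
    also have "\<dots> = sum (\<lambda>j. S$i$j * W$j$k) UNIV"
      by (simp add: matrix_matrix_mult_def)
    also have "\<dots> = S$i$a*W$a$k + S$i$b*W$b$k + sum (\<lambda>j. S$i$j * W$j$k) (UNIV - {a,b})"
      by (rule sum_split2[OF ab])
    finally show ?thesis by simp
  qed
  have Sab: "S$a$b = \<beta> * S$b$b" using rowA[of b] ab w0 by (simp add: \<beta>_def field_simps m1)
  have Saa: "S$a$a = 1 / W$a$a + \<beta> * S$a$b" using rowA[of a] w0 symS[of b a]
    by (simp add: \<beta>_def field_simps m1)
  have Sia: "S$i$a = \<beta> * S$i$b" if "i \<noteq> a" for i
    using rowA[of i] that w0 symS[of a i] symS[of b i] by (simp add: \<beta>_def field_simps m1)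
  have Wba: "W$b$a = W$a$b" using symW by simp
  have Wak: "W$a$k = 0" if "k \<noteq> a" "k \<noteq> b" for k using leaf that by simp
  show ?thesis
  proof (subst vec_eq_iff, intro allI, subst vec_eq_iff, intro allI)
    fix i k
    have "(Sq ** Wq) $ i $ k = sum (\<lambda>j. Sq$i$j * Wq$j$k) UNIV"
      by (simp add: matrix_matrix_mult_def)
    also have "\<dots> = Sq$i$a * Wq$a$k + Sq$i$b * Wq$b$k + sum (\<lambda>j. Sq$i$j * Wq$j$k) (UNIV - {a,b})"
      by (rule sum_split2[OF ab])
    also have "sum (\<lambda>j. Sq$i$j * Wq$j$k) (UNIV - {a,b}) =
       (if k = a then sum (\<lambda>j. S$i$j * W$j$b) (UNIV - {a,b}) / \<beta> else if k = b then 0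
        else sum (\<lambda>j. S$i$j * W$j$k) (UNIV - {a,b}))"
      by (auto simp: Sq_def Wq_def sum_divide_distrib intro!: sum.cong)
    finally have E: "(Sq ** Wq) $ i $ k = Sq$i$a * Wq$a$k + Sq$i$b * Wq$b$k +
       (if k = a then sum (\<lambda>j. S$i$j * W$j$b) (UNIV - {a,b}) / \<beta> else if k = b then 0
        else sum (\<lambda>j. S$i$j * W$j$k) (UNIV - {a,b}))" .
    show "(Sq ** Wq) $ i $ k = mat 1 $ i $ k"
      unfolding E Ssum m1
      using ab b0 w0 c0 u0
      apply (cases "i = a"; cases "i = b"; cases "k = a"; cases "k = b")
      apply (simp_all add: Sq_def Wq_def Sab Saa Sia Wba Wak)
      apply (simp_all add: \<beta>_def field_simps power2_eq_square)
      done
  qed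
qed


lemma sym_inner:
  fixes S :: "real^'n^'n"
  assumes "transpose S = S"
  shows "u \<bullet> (S *v z) = z \<bullet> (S *v u)"
proof -
  have "u \<bullet> (S *v z) = (u v* S) \<bullet> z" by (simp add: dot_lmul_matrix)
  also have "u v* S = transpose S *v u" by simp
  finally show ?thesis using assms by (simp add: inner_commute)
qed

lemma pd_new:
  fixes S W :: "real^'n^'n" and a b :: 'n and c :: real
  assumes ab: "a \<noteq> b" and pd: "pos_def S" and SW: "S ** W = mat 1"
    and w0: "W$a$a \<noteq> 0" and u0: "W$b$a \<noteq> 0" and c0: "c > 0"
  shows "pos_def ((\<chi> i j. if i = a \<and> j = a then S $ a $ a - 1 / (W $ a $ a)
                        else if i = b \<and> j = b then S $ b $ b + c
                        else S $ i $ j) :: real^'n^'n)" (is "pos_def ?Sq")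
proof -
  have sS: "transpose S = S" using pd by (simp add: pos_def_def)
  have symS: "S$i$j = S$j$i" for i j
  proof -
    have "S$i$j = transpose S $ i $ j" using sS by simp
    also have "\<dots> = S$j$i" by (simp add: transpose_def)
    finally show ?thesis .
  qed
  have tr: "transpose ?Sq = ?Sq"
    using ab by (auto simp: transpose_def vec_eq_iff symS)
  define w where "w = W$a$a"
  have Sqv: "?Sq *v x = S *v x + (c * x$b) *\<^sub>R axis b 1 - (x$a / w) *\<^sub>R axis a 1" for x
  proof (subst vec_eq_iff, intro allI)
    fix i
    have "(?Sq *v x) $ i = sum (\<lambda>j. ?Sq$i$j * x$j) UNIV" by (simp add: matrix_vector_mult_def)
    also have "\<dots> = ?Sq$i$a * x$a + ?Sq$i$b * x$b + sum (\<lambda>j. ?Sq$i$j * x$j) (UNIV - {a,b})"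
      by (rule sum_split2[OF ab])
    also have "sum (\<lambda>j. ?Sq$i$j * x$j) (UNIV - {a,b}) = sum (\<lambda>j. S$i$j * x$j) (UNIV - {a,b})"
      by (rule sum.cong) auto
    finally have e1: "(?Sq *v x) $ i = ?Sq$i$a * x$a + ?Sq$i$b * x$b + sum (\<lambda>j. S$i$j * x$j) (UNIV - {a,b})" .
    have "(S *v x) $ i = sum (\<lambda>j. S$i$j * x$j) UNIV" by (simp add: matrix_vector_mult_def)
    also have "\<dots> = S$i$a * x$a + S$i$b * x$b + sum (\<lambda>j. S$i$j * x$j) (UNIV - {a,b})"
      by (rule sum_split2[OF ab])
    finally have e2: "(S *v x) $ i = S$i$a * x$a + S$i$b * x$b + sum (\<lambda>j. S$i$j * x$j) (UNIV - {a,b})" .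
    show "(?Sq *v x) $ i = (S *v x + (c * x$b) *\<^sub>R axis b 1 - (x$a / w) *\<^sub>R axis a 1) $ i"
      unfolding e1 using e2 ab by (auto simp: axis_def w_def algebra_simps)
  qed
  define v where "v = (1/w) *\<^sub>R (W *v axis a 1)"
  have Sv: "S *v v = (1/w) *\<^sub>R axis a 1"
    unfolding v_def by (simp add: matrix_vector_mult_scaleR matrix_vector_mul_assoc SW)
  have vi: "v$i = W$i$a / w" for i
    by (simp add: v_def matrix_vector_mult_basis column_def)
  have quad: "x \<bullet> (?Sq *v x) = (x - x$a *\<^sub>R v) \<bullet> (S *v (x - x$a *\<^sub>R v)) + c * (x$b)^2" for x
  proof -
    have i1: "v \<bullet> (S *v x) = x$a / w" using sym_inner[OF sS, of v x] Sv
      by (simp add: inner_axis)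
    have i2: "x \<bullet> (S *v v) = x$a / w" using Sv by (simp add: inner_axis)
    have i3: "v \<bullet> (S *v v) = 1 / w" using Sv vi[of a] w0 by (simp add: inner_axis w_def)
    have "(x - x$a *\<^sub>R v) \<bullet> (S *v (x - x$a *\<^sub>R v)) =
        x \<bullet> (S *v x) - x$a * (x \<bullet> (S *v v)) - x$a * (v \<bullet> (S *v x)) + x$a * x$a * (v \<bullet> (S *v v))"
    proof -
      have "S *v (x - x$a *\<^sub>R v) = S *v x - x$a *\<^sub>R (S *v v)"
        by (simp add: matrix_vector_mult_diff_distrib matrix_vector_mult_scaleR)
      then show ?thesis by (simp add: inner_diff_left inner_diff_right right_diff_distrib)
    qed
    also have "\<dots> = x \<bullet> (S *v x) - (x$a)^2 / w" using i1 i2 i3 by (simp add: power2_eq_square)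
    finally show ?thesis unfolding Sqv
      by (simp add: inner_diff_right inner_add_right inner_axis power2_eq_square)
  qed
  have pos: "x \<bullet> (?Sq *v x) > 0" if "x \<noteq> 0" for x
  proof (cases "x - x$a *\<^sub>R v = 0")
    case False
    then have "(x - x$a *\<^sub>R v) \<bullet> (S *v (x - x$a *\<^sub>R v)) > 0" using pd by (simp add: pos_def_def)
    moreover have "c * (x$b)^2 \<ge> 0" using c0 by simp
    ultimately show ?thesis unfolding quad by linarith
  next
    case True
    then have xe: "x = x$a *\<^sub>R v" by simp
    have "x$a \<noteq> 0"
    proof
      assume "x$a = 0"
      then have "x$a *\<^sub>R v = 0" by simp
      with xe have "x = 0" by (rule trans)
      with that show False by contradiction
    qed
    moreover have "x$b = x$a * (W$b$a / w)"
    proof -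
      have "x$b = (x$a *\<^sub>R v)$b" using arg_cong[OF xe, of "\<lambda>y. y$b"] by simp
      also have "\<dots> = x$a * (W$b$a / w)" using vi[of b] by simp
      finally show ?thesis .
    qed
    ultimately have "x$b \<noteq> 0" using u0 w0 by (simp add: w_def)
    then have "c * (x$b)^2 > 0" using c0 by simp
    moreover have "(x - x$a *\<^sub>R v) \<bullet> (S *v (x - x$a *\<^sub>R v)) = 0" using True by simp
    ultimately show ?thesis unfolding quad by linarith
  qed
  show ?thesis using tr pos by (simp add: pos_def_def)
qed


theorem proposition1:
  fixes Sigma D :: "real^'n^'n" and a b :: 'n and c :: real
  assumes "pos_def Sigma"
    and "is_tree (ci_adj Sigma)"
    and "\<forall>i j. i \<noteq> j \<longrightarrow> D $ i $ j = 0"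
    and "\<forall>i. D $ i $ i \<ge> 0"
    and "ci_adj Sigma a b"
    and "\<forall>j. ci_adj Sigma a j \<longrightarrow> j = b"
    and "0 < c" and "c < D $ b $ b"
  shows "pos_def (\<chi> i j. if i = a \<and> j = a then Sigma $ a $ a - 1 / (matrix_inv Sigma $ a $ a)
                        else if i = b \<and> j = b then Sigma $ b $ b + c
                        else Sigma $ i $ j)
    \<and> (\<forall>i j. ci_adj (\<chi> i j. if i = a \<and> j = a then Sigma $ a $ a - 1 / (matrix_inv Sigma $ a $ a)
                        else if i = b \<and> j = b then Sigma $ b $ b + c
                        else Sigma $ i $ j) i j
             \<longleftrightarrow> ci_adj Sigma (swap_ab a b i) (swap_ab a b j))"
proof -
  define S where "S = Sigma"
  define W where "W = matrix_inv Sigma"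
  have pd: "pos_def S" using assms(1) by (simp add: S_def)
  have inv: "invertible S" using pd_invertible[OF pd] .
  have SW: "S ** W = mat 1" and WS: "W ** S = mat 1"
    using minv_props[OF inv] by (simp_all add: S_def W_def)
  have sS: "transpose S = S" using pd by (simp add: pos_def_def)
  have sW: "transpose W = W"
  proof -
    have "transpose W ** S = mat 1"
      using arg_cong[OF SW, of transpose] sS by (simp add: matrix_transpose_mul)
    then have "transpose W = transpose W ** (S ** W)" using SW by simp
    also have "\<dots> = W" using \<open>transpose W ** S = mat 1\<close> by (simp add: matrix_mul_assoc)
    finally show ?thesis .
  qed
  have symW: "W$i$j = W$j$i" for i j
  proof -
    have "W$i$j = transpose W $ i $ j" using sW by simp
    also have "\<dots> = W$j$i" by (simp add: transpose_def)
    finally show ?thesis .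
  qed
  have ab: "a \<noteq> b" and u0: "W$a$b \<noteq> 0" using assms(5) by (simp_all add: ci_adj_def W_def)
  have leaf: "\<forall>j. j \<noteq> a \<longrightarrow> j \<noteq> b \<longrightarrow> W$a$j = 0" using assms(6) by (auto simp: ci_adj_def W_def)
  have w0: "W$a$a \<noteq> 0"
  proof
    assume h: "W$a$a = 0"
    have "S *v (W *v axis a 1) = axis a 1" by (simp add: matrix_vector_mul_assoc SW)
    have "W *v axis a 1 \<noteq> 0"
    proof
      assume "W *v axis a 1 = 0"
      then have "S *v (W *v axis a 1) = 0" by simp
      with \<open>S *v (W *v axis a 1) = axis a 1\<close> show False by simp
    qed
    then have "(W *v axis a 1) \<bullet> (S *v (W *v axis a 1)) > 0" using pd by (simp add: pos_def_def)
    also have "(W *v axis a 1) \<bullet> (S *v (W *v axis a 1)) = W$a$a"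
      using \<open>S *v (W *v axis a 1) = axis a 1\<close>
      by (simp add: inner_axis matrix_vector_mult_basis column_def)
    finally show False using h by simp
  qed
  have c0: "c \<noteq> 0" using assms(7) by simp
  define \<beta> where "\<beta> = - W$a$b / W$a$a"
  have b0: "\<beta> \<noteq> 0" using u0 w0 by (simp add: \<beta>_def)
  define Wq where "Wq = ((\<chi> i j. if i = a \<and> j = a then (W$b$b - (W$a$b)^2 / W$a$a + 1/c) / \<beta>^2
      else if (i = a \<and> j = b) \<or> (i = b \<and> j = a) then - 1 / (c * \<beta>)
      else if i = b \<and> j = b then 1 / c
      else if i = a then W$b$j / \<beta>
      else if j = a then W$i$b / \<beta>
      else if i = b \<or> j = b then 0
      else W$i$j) :: real^'n^'n)"
  define Sq where "Sq = ((\<chi> i j. if i = a \<and> j = a then Sigma $ a $ a - 1 / (matrix_inv Sigma $ a $ a)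
                        else if i = b \<and> j = b then Sigma $ b $ b + c
                        else Sigma $ i $ j) :: real^'n^'n)"
  have prod: "Sq ** Wq = mat 1"
    using prod_id[OF ab SW WS sS sW w0 u0 leaf c0]
    unfolding Sq_def Wq_def \<beta>_def S_def W_def .
  have minv: "matrix_inv Sq = Wq" using minv_unique[OF prod] .
  have pdq: "pos_def Sq"
    using pd_new[OF ab pd SW w0 _ assms(7)] u0 symW[of b a]
    unfolding Sq_def S_def W_def by simp
  have adj: "ci_adj Sq i j \<longleftrightarrow> ci_adj Sigma (swap_ab a b i) (swap_ab a b j)" for i j
  proof -
    have Wa: "W$a$j = 0" if "j \<noteq> a" "j \<noteq> b" for j using leaf that by simp
    show ?thesis
      unfolding ci_adj_def minv swap_ab_def W_def[symmetric]
      using ab b0 c0 u0 symW[of b a] symW[of i a] symW[of i b] Wa[of i]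
      apply (cases "i = a"; cases "i = b"; cases "j = a"; cases "j = b")
      apply (simp_all add: Wq_def Wa)
      done
  qed
  show ?thesis using pdq adj unfolding Sq_def by simp
qed

end
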